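(* Let $p(x)\in\mathbb{C}[x_1,\ldots,x_n]$ be any polynomial. Then there exists a nonconfluent holonomic hypergeometric (Horn) system of the form $$x_j P_j(\theta)f(x)=Q_j(\theta)f(x),\qquad j=1,\ldots,n,$$ having $p(x)$ as one of its solutions. Moreover, this system can be chosen so that the left ideal in the Weyl algebra generated by the operators $x_jP_j(\theta)-Q_j(\theta)$, $j=1,\ldots,n$, admits a basis consisting of a family of pairwise commuting differential operators.
   Context: Notation: $x=(x_1,\ldots,x_n)$, $\theta=(\theta_1,\ldots,\theta_n)$ with $\theta_j=x_j\frac{\partial}{\partial x_j}$, $e_1,\ldots,e_n$ the standard basis of $\mathbb{Z}^n$. A function $\varphi(s)$ of $s\in\mathbb{C}^n$ is a hypergeometric (Ore–Sato) coefficient if for each $j$ the quotient $\varphi(s+e_j)/\varphi(s)$ is a rational function of $s$, written $P_j(s)/Q_j(s+e_j)$ with polynomials $P_j,Q_j$. The Horn hypergeometric system defined by $\varphi$ is the system $x_jP_j(\theta)f=Q_j(\theta)f$, $j=1,\ldots,n$; any (formal) Laurent series $\sum_s\varphi(s)x^s$ is a formal solution of it. The system is holonomic if it has finite holonomic rank, and nonconfluent if $\deg P_j=\deg Q_j$ for every $j=1,\ldots,n$. *)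

theory Defs
  imports "HOL-Analysis.Analysis" "HOL-Library.Poly_Mapping"
begin

text \<open>
  Multivariate polynomials in the variables indexed by the finite type 'n
  (so n = CARD('n)) with complex coefficients, represented as finitely
  supported maps from exponent vectors (monomials) to coefficients.
  Differential operators from the Weyl algebra are represented by their
  (faithful) action on the polynomial ring C[x].
\<close>

type_synonym 'n mpoly = "('n \<Rightarrow>\<^sub>0 nat) \<Rightarrow>\<^sub>0 complex"
type_synonym 'n diffop = "'n mpoly \<Rightarrow> 'n mpoly"

definition peval :: "'n::finite mpoly \<Rightarrow> ('n \<Rightarrow> complex) \<Rightarrow> complex" where
  "peval P s = (\<Sum>(m::'n \<Rightarrow>\<^sub>0 nat)\<in>Poly_Mapping.keys P. Poly_Mapping.lookup P m * (\<Prod>k\<in>UNIV. s k ^ Poly_Mapping.lookup m k))"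

definition tdeg :: "'n::finite mpoly \<Rightarrow> nat" where
  "tdeg P = (if P = 0 then 0 else Max ((\<lambda>m::'n \<Rightarrow>\<^sub>0 nat. \<Sum>k\<in>UNIV. Poly_Mapping.lookup m k) ` Poly_Mapping.keys P))"

definition xop :: "'n::finite \<Rightarrow> 'n diffop" where
  "xop i f = Poly_Mapping.single (Poly_Mapping.single i 1) 1 * f"

definition mulop :: "'n::finite mpoly \<Rightarrow> 'n diffop" where
  "mulop c f = c * f"

definition pd :: "'n::finite \<Rightarrow> 'n diffop" where
  "pd i f = (\<Sum>(m::'n \<Rightarrow>\<^sub>0 nat)\<in>Poly_Mapping.keys f. Poly_Mapping.single (m - Poly_Mapping.single i 1)
                (of_nat (Poly_Mapping.lookup m i) * Poly_Mapping.lookup f m))"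

definition pdpow :: "('n::finite \<Rightarrow>\<^sub>0 nat) \<Rightarrow> 'n diffop" where
  "pdpow a f = (\<Sum>(m::'n \<Rightarrow>\<^sub>0 nat)\<in>Poly_Mapping.keys f. Poly_Mapping.single (m - a)
                (of_nat (\<Prod>k\<in>UNIV. \<Prod>i<Poly_Mapping.lookup a k. Poly_Mapping.lookup m k - i) * Poly_Mapping.lookup f m))"

definition theta :: "'n::finite \<Rightarrow> 'n diffop" where
  "theta j = xop j \<circ> pd j"

text \<open>P(theta) for a polynomial P(s): since theta^b x^m = m^b x^m, the operator
  P(theta) acts on monomials by P(theta) x^m = P(m) x^m.\<close>
definition theta_op :: "'n::finite mpoly \<Rightarrow> 'n diffop" where
  "theta_op P f = (\<Sum>(m::'n \<Rightarrow>\<^sub>0 nat)\<in>Poly_Mapping.keys f. Poly_Mapping.single m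
                   (peval P (\<lambda>k. of_nat (Poly_Mapping.lookup m k)) * Poly_Mapping.lookup f m))"

definition horn_op :: "('n::finite \<Rightarrow> 'n mpoly) \<Rightarrow> ('n \<Rightarrow> 'n mpoly) \<Rightarrow> 'n \<Rightarrow> 'n diffop" where
  "horn_op P Q j f = xop j (theta_op (P j) f) - theta_op (Q j) f"

inductive_set weyl :: "'n::finite diffop set" where
  weyl_x: "xop i \<in> weyl"
| weyl_d: "pd i \<in> weyl"
| weyl_const: "(\<lambda>f. Poly_Mapping.single 0 c * f) \<in> weyl"
| weyl_add: "A \<in> weyl \<Longrightarrow> B \<in> weyl \<Longrightarrow> (\<lambda>f. A f + B f) \<in> weyl"
| weyl_comp: "A \<in> weyl \<Longrightarrow> B \<in> weyl \<Longrightarrow> A \<circ> B \<in> weyl"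

inductive_set lideal :: "'n::finite diffop set \<Rightarrow> 'n diffop set" for G where
  lideal_gen: "L \<in> G \<Longrightarrow> L \<in> lideal G"
| lideal_zero: "(\<lambda>f. 0) \<in> lideal G"
| lideal_add: "A \<in> lideal G \<Longrightarrow> B \<in> lideal G \<Longrightarrow> (\<lambda>f. A f + B f) \<in> lideal G"
| lideal_mult: "A \<in> weyl \<Longrightarrow> B \<in> lideal G \<Longrightarrow> A \<circ> B \<in> lideal G"

definition shift :: "('n \<Rightarrow> complex) \<Rightarrow> 'n \<Rightarrow> 'n \<Rightarrow> complex" where
  "shift s j = s(j := s j + 1)"

text \<open>(P, Q) define a Horn hypergeometric system: there is a hypergeometric
  (Ore--Sato) coefficient phi with phi(s+e_j)/phi(s) = P_j(s)/Q_j(s+e_j),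
  i.e. phi is nonzero and satisfies phi(s+e_j) Q_j(s+e_j) = P_j(s) phi(s)
  on a dense open subset of C^n (off the poles/zeros of phi), Q_j nonzero.\<close>
definition horn_system :: "('n::finite \<Rightarrow> 'n mpoly) \<Rightarrow> ('n \<Rightarrow> 'n mpoly) \<Rightarrow> bool" where
  "horn_system P Q \<longleftrightarrow> (\<forall>j. Q j \<noteq> 0) \<and>
     (\<exists>(\<phi> :: ('n \<Rightarrow> complex) \<Rightarrow> complex) U. open U \<and> closure U = UNIV \<and>
        (\<forall>s\<in>U. \<phi> s \<noteq> 0 \<and>
           (\<forall>j. \<phi> (shift s j) * peval (Q j) (shift s j) = peval (P j) s * \<phi> s)))"

definition nonconfluent :: "('n::finite \<Rightarrow> 'n mpoly) \<Rightarrow> ('n \<Rightarrow> 'n mpoly) \<Rightarrow> bool" where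
  "nonconfluent P Q \<longleftrightarrow> (\<forall>j. tdeg (P j) = tdeg (Q j))"

text \<open>Finite holonomic rank: R/RI is finite-dimensional over C(x), where
  R = C(x)<d> and I is the Weyl-algebra ideal of the system; equivalently
  (clearing denominators) finitely many d^b, b in B, span R/RI over C(x):
  for each a there are polynomials q \<noteq> 0 and c_b with
  q d^a - sum_b c_b d^b in I.\<close>
definition holonomic :: "('n::finite \<Rightarrow> 'n mpoly) \<Rightarrow> ('n \<Rightarrow> 'n mpoly) \<Rightarrow> bool" where
  "holonomic P Q \<longleftrightarrow> (\<exists>B. finite B \<and> (\<forall>a. \<exists>q c. q \<noteq> 0 \<and>
      (\<lambda>f. mulop q (pdpow a f) - (\<Sum>b\<in>B. mulop (c b) (pdpow b f)))
        \<in> lideal (Set.range (horn_op P Q))))"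

end

theory Submission imports Defs "HOL-Computational_Algebra.Polynomial" begin

abbreviation lk where "lk \<equiv> Poly_Mapping.lookup"
abbreviation sg where "sg \<equiv> Poly_Mapping.single"
abbreviation ks where "ks \<equiv> Poly_Mapping.keys"

lemma sum_monos: "(\<Sum>m\<in>ks f. sg m (lk f m)) = (f :: ('a \<Rightarrow>\<^sub>0 'b::comm_monoid_add))"
  apply (rule poly_mapping_eqI)
  apply (simp add: lookup_sum lookup_single when_def)
  apply (cases "lk f k = 0")
  apply (auto simp: in_keys_iff)
  done

definition addop :: "('a::comm_monoid_add \<Rightarrow> 'b::ab_group_add) \<Rightarrow> bool" where
  "addop A \<longleftrightarrow> (\<forall>f g. A (f + g) = A f + A g)"

lemma addop_0: "addop A \<Longrightarrow> A 0 = 0"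
  unfolding addop_def by (metis add_0 add_cancel_right_right)

lemma addop_sum: "addop A \<Longrightarrow> A (\<Sum>x\<in>S. g x) = (\<Sum>x\<in>S. A (g x))"
  by (induction S rule: infinite_finite_induct) (auto simp: addop_0 addop_def)

lemma addop_minus: "addop (A :: 'a::ab_group_add \<Rightarrow> 'b::ab_group_add) \<Longrightarrow> A (f - g) = A f - A g"
  unfolding addop_def by (metis add_diff_cancel diff_add_cancel eq_diff_eq)

lemma addop_uminus: "addop (A :: 'a::ab_group_add \<Rightarrow> 'b::ab_group_add) \<Longrightarrow> A (- g) = - A g"
  using addop_minus[of A 0 g] by (simp add: addop_0)

lemma lin_ext:
  fixes A B :: "('a \<Rightarrow>\<^sub>0 'c::comm_monoid_add) \<Rightarrow> 'b::ab_group_add"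
  assumes "addop A" "addop B" "\<And>m c. A (sg m c) = B (sg m c)"
  shows "A = B"
proof
  fix f
  have "A f = A (\<Sum>m\<in>ks f. sg m (lk f m))" by (simp add: sum_monos)
  also have "\<dots> = (\<Sum>m\<in>ks f. B (sg m (lk f m)))" using assms by (simp add: addop_sum)
  also have "\<dots> = B (\<Sum>m\<in>ks f. sg m (lk f m))" using assms by (simp add: addop_sum)
  finally show "A f = B f" by (simp add: sum_monos)
qed

lemma addop_add: "addop A \<Longrightarrow> addop B \<Longrightarrow> addop (\<lambda>f. A f + B f)"
  unfolding addop_def by (simp add: algebra_simps)
lemma addop_diff: "addop A \<Longrightarrow> addop B \<Longrightarrow> addop (\<lambda>f. A f - B f)"
  unfolding addop_def by (simp add: algebra_simps)
lemma addop_comp: "addop A \<Longrightarrow> addop B \<Longrightarrow> addop (A \<circ> B)"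
  unfolding addop_def by simp
lemma addop_comp': "addop A \<Longrightarrow> addop B \<Longrightarrow> addop (\<lambda>f. A (B f))"
  unfolding addop_def by simp
lemma addop_mul: "addop (\<lambda>f. (c::'a::ring) * A f) = addop A \<or> True" by simp
lemma addop_mulI: "addop A \<Longrightarrow> addop (\<lambda>f. (c::'a::ring) * A f)"
  unfolding addop_def by (simp add: algebra_simps)
lemma addop_mulI': "addop (\<lambda>f. (c::'a::ring) * f)"
  unfolding addop_def by (simp add: algebra_simps)
lemma addop_sumI: "(\<And>x. x \<in> S \<Longrightarrow> addop (A x)) \<Longrightarrow> addop (\<lambda>f. \<Sum>x\<in>S. A x f)"
  unfolding addop_def by (simp add: sum.distrib)

definition mop :: "(('n \<Rightarrow>\<^sub>0 nat) \<Rightarrow> ('n \<Rightarrow>\<^sub>0 nat)) \<Rightarrow> (('n \<Rightarrow>\<^sub>0 nat) \<Rightarrow> complex) \<Rightarrow> 'n mpoly \<Rightarrow> 'n mpoly" where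
  "mop \<sigma> w f = (\<Sum>m\<in>ks f. sg (\<sigma> m) (w m * lk f m))"

lemma mop_superset: "finite S \<Longrightarrow> ks f \<subseteq> S \<Longrightarrow> mop \<sigma> w f = (\<Sum>m\<in>S. sg (\<sigma> m) (w m * lk f m))"
  unfolding mop_def by (rule sum.mono_neutral_left) (auto simp: in_keys_iff)

lemma mop_add0: "mop \<sigma> w (f + g) = mop \<sigma> w f + mop \<sigma> w g"
proof -
  let ?S = "ks f \<union> ks g \<union> ks (f + g)"
  have "mop \<sigma> w (f + g) = (\<Sum>m\<in>?S. sg (\<sigma> m) (w m * lk (f+g) m))" by (rule mop_superset) auto
  also have "\<dots> = (\<Sum>m\<in>?S. sg (\<sigma> m) (w m * lk f m)) + (\<Sum>m\<in>?S. sg (\<sigma> m) (w m * lk g m))"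
    by (simp add: lookup_add distrib_left single_add sum.distrib)
  also have "\<dots> = mop \<sigma> w f + mop \<sigma> w g" by (subst (1 2) mop_superset[symmetric]) auto
  finally show ?thesis .
qed
lemma mop_add: "addop (mop \<sigma> w)"
  unfolding addop_def by (simp add: mop_add0)

lemma mop_single: "mop \<sigma> w (sg m c) = sg (\<sigma> m) (w m * c)"
  unfolding mop_def by simp

lemma pd_mop: "pd i = mop (\<lambda>m. m - sg i 1) (\<lambda>m. of_nat (lk m i))"
  by (rule ext) (simp add: pd_def mop_def)
lemma pdpow_mop: "pdpow a = mop (\<lambda>m. m - a) (\<lambda>m. of_nat (\<Prod>k\<in>UNIV. \<Prod>i<lk a k. lk m k - i))"
  by (rule ext) (simp add: pdpow_def mop_def)
lemma theta_mop: "theta_op P = mop (\<lambda>m. m) (\<lambda>m. peval P (\<lambda>k. of_nat (lk m k)))"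
  by (rule ext) (simp add: theta_op_def mop_def)

lemma xop_single: "xop i (sg m c) = sg (m + sg i 1) c"
  by (simp add: xop_def mult_single add.commute)

lemma addop_xop: "addop (xop i)" unfolding addop_def xop_def by (simp add: algebra_simps)
lemma addop_pd: "addop (pd i)" by (simp add: pd_mop mop_add)
lemma addop_pdpow: "addop (pdpow a)" by (simp add: pdpow_mop mop_add)
lemma addop_theta: "addop (theta_op P)" by (simp add: theta_mop mop_add)
lemma addop_horn: "addop (horn_op P Q j)"
  unfolding horn_op_def
  by (rule addop_diff[OF addop_comp'[OF addop_xop addop_theta] addop_theta])

lemma horn_single: "horn_op P Q j (sg m c) =
   sg (m + sg j 1) (peval (P j) (\<lambda>k. of_nat (lk m k)) * c) - sg m (peval (Q j) (\<lambda>k. of_nat (lk m k)) * c)"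
  by (simp add: horn_op_def theta_mop mop_single xop_single)

definition ffc :: "nat \<Rightarrow> nat \<Rightarrow> complex" where
  "ffc r n = (\<Prod>i<r. of_nat n - of_nat i)"

lemma ffc_0[simp]: "ffc 0 n = 1" by (simp add: ffc_def)
lemma ffc_Suc: "ffc (Suc r) n = ffc r n * (of_nat n - of_nat r)" by (simp add: ffc_def)
lemma ffc_zero: "n < r \<Longrightarrow> ffc r n = 0"
  unfolding ffc_def by (rule prod_zero) auto
lemma ffc_1[simp]: "ffc 1 n = of_nat n" by (simp add: ffc_def)
lemma ffc_nat: "of_nat (\<Prod>i<r. n - i) = ffc r n"
proof (induction r)
  case 0 then show ?case by simp
next
  case (Suc r)
  show ?case
  proof (cases "n < Suc r")
    case True
    then have "(\<Prod>i<Suc r. n - i) = 0" by (intro prod_zero) auto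
    then show ?thesis using True by (simp add: ffc_zero)
  next
    case False
    then show ?thesis using Suc by (simp add: ffc_Suc of_nat_diff)
  qed
qed
lemma ffc_nat': "(\<Prod>i<r. (of_nat (n - i)::complex)) = ffc r n"
  using ffc_nat[where r=r and n=n] by simp
lemma ffc_Suc0[simp]: "ffc (Suc 0) n = of_nat n" by (simp add: ffc_def)
lemma ffc_add: "ffc (x + y) n = ffc x (n - y) * ffc y n"
proof (induction x)
  case 0 then show ?case by simp
next
  case (Suc x)
  show ?case
  proof (cases "n < y")
    case True then show ?thesis by (simp add: ffc_zero)
  next
    case False
    then show ?thesis using Suc by (simp add: ffc_Suc of_nat_diff algebra_simps)
  qed
qed
lemma ffc_shift: "ffc (Suc r) (Suc n) = of_nat (Suc n) * ffc r n"
  by (induction r) (simp_all add: ffc_Suc algebra_simps)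

definition wtc :: "('n::finite \<Rightarrow>\<^sub>0 nat) \<Rightarrow> ('n \<Rightarrow>\<^sub>0 nat) \<Rightarrow> complex" where
  "wtc a m = (\<Prod>k\<in>UNIV. ffc (lk a k) (lk m k))"

lemma pdpow_single: "pdpow a (sg m c) = sg (m - a) (wtc a m * c)"
  by (simp add: pdpow_mop mop_single wtc_def ffc_nat')
lemma pd_single: "pd i (sg m c) = sg (m - sg i 1) (of_nat (lk m i) * c)"
  by (simp add: pd_mop mop_single)

lemma wtc_single: "wtc (sg i r) m = ffc r (lk m i)"
proof -
  have "\<And>k. ffc (lk (sg i r) k) (lk m k) = (if k = i then ffc r (lk m i) else 1)"
    by (auto simp: lookup_single when_def)
  then show ?thesis unfolding wtc_def by simp
qed
lemma wtc_0[simp]: "wtc 0 m = 1" by (simp add: wtc_def)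

lemma pd_pdpow: "pd i = pdpow (sg i 1)"
  by (rule lin_ext[OF addop_pd addop_pdpow]) (simp add: pd_single pdpow_single wtc_single)

lemma pdpow_0: "pdpow 0 = (\<lambda>f. f)"
  by (rule lin_ext[OF addop_pdpow]) (auto simp: pdpow_single addop_def)

lemma pdpow_add: "pdpow (a + b) = pdpow a \<circ> pdpow b"
proof (rule lin_ext[OF addop_pdpow addop_comp[OF addop_pdpow addop_pdpow]])
  fix m c
  have "wtc (a + b) m = wtc a (m - b) * wtc b m"
    by (simp add: wtc_def lookup_add lookup_minus ffc_add prod.distrib)
  moreover have "m - (a + b) = m - b - a" by (simp add: diff_diff_add add.commute)
  ultimately show "pdpow (a + b) (sg m c) = (pdpow a \<circ> pdpow b) (sg m c)"
    by (simp add: pdpow_single mult.assoc)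
qed

lemma key_pos: "0 < lk m k \<Longrightarrow> a + (m - sg k 1) = a + m - sg k (1::nat)"
  by (rule poly_mapping_eqI) (auto simp: lookup_add lookup_minus lookup_single when_def)

lemma leib_mono: "pd k (sg a \<alpha> * sg m \<beta>) = sg a \<alpha> * pd k (sg m \<beta>) + pd k (sg a \<alpha>) * sg m \<beta>"
proof -
  have h1: "sg (a + (m - sg k 1)) (\<alpha> * (of_nat (lk m k) * \<beta>)) = sg (a + m - sg k 1) (of_nat (lk m k) * \<alpha> * \<beta>)"
  proof (cases "lk m k = 0")
    case True then show ?thesis by simp
  next
    case False
    then have "a + (m - sg k 1) = a + m - sg k 1" by (intro key_pos) simp
    then show ?thesis by (simp add: mult_ac)
  qed
  have h2: "sg (a - sg k 1 + m) (of_nat (lk a k) * \<alpha> * \<beta>) = sg (a + m - sg k 1) (of_nat (lk a k) * \<alpha> * \<beta>)"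
  proof (cases "lk a k = 0")
    case True then show ?thesis by simp
  next
    case False then show ?thesis using key_pos[of a k m] by (simp add: add.commute)
  qed
  have "pd k (sg a \<alpha> * sg m \<beta>) = sg (a + m - sg k 1) (of_nat (lk m k) * \<alpha> * \<beta>) + sg (a + m - sg k 1) (of_nat (lk a k) * \<alpha> * \<beta>)"
    by (simp add: mult_single pd_single lookup_add single_add[symmetric] algebra_simps)
  also have "\<dots> = sg (a + (m - sg k 1)) (\<alpha> * (of_nat (lk m k) * \<beta>)) + sg (a - sg k 1 + m) (of_nat (lk a k) * \<alpha> * \<beta>)"
    by (simp only: h1 h2)
  also have "\<dots> = sg a \<alpha> * pd k (sg m \<beta>) + pd k (sg a \<alpha>) * sg m \<beta>"
    by (simp only: mult_single pd_single)
  finally show ?thesis .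
qed

lemma leibniz: "pd k (c * f) = c * pd k f + pd k c * f"
proof -
  have "(\<lambda>f. pd k (c * f)) = (\<lambda>f. c * pd k f + pd k c * f)"
  proof (rule lin_ext)
    show "addop (\<lambda>f. pd k (c * f))" using addop_pd[of k] unfolding addop_def by (simp add: distrib_left)
    show "addop (\<lambda>f. c * pd k f + pd k c * f)" using addop_pd[of k] unfolding addop_def by (simp add: algebra_simps)
    fix m \<beta>
    have "(\<lambda>c. pd k (c * sg m \<beta>)) = (\<lambda>c. c * pd k (sg m \<beta>) + pd k c * sg m \<beta>)"
    proof (rule lin_ext)
      show "addop (\<lambda>c. pd k (c * sg m \<beta>))" using addop_pd[of k] unfolding addop_def by (simp add: distrib_right)
      show "addop (\<lambda>c. c * pd k (sg m \<beta>) + pd k c * sg m \<beta>)" using addop_pd[of k] unfolding addop_def by (simp add: algebra_simps)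
    qed (rule leib_mono)
    then show "pd k (c * sg m \<beta>) = c * pd k (sg m \<beta>) + pd k c * sg m \<beta>" by metis
  qed
  then show ?thesis by metis
qed

definition mnm :: "('n::finite \<Rightarrow>\<^sub>0 nat) \<Rightarrow> ('n \<Rightarrow> complex) \<Rightarrow> complex" where
  "mnm m s = (\<Prod>k\<in>UNIV. s k ^ lk m k)"

lemma peval_superset: "finite S \<Longrightarrow> ks P \<subseteq> S \<Longrightarrow> peval P s = (\<Sum>m\<in>S. lk P m * mnm m s)"
  unfolding peval_def mnm_def by (rule sum.mono_neutral_left) (auto simp: in_keys_iff)

lemma peval_add0: "peval (f + g) s = peval f s + peval g s"
proof -
  let ?S = "ks f \<union> ks g \<union> ks (f + g)"
  have "peval (f + g) s = (\<Sum>m\<in>?S. lk (f+g) m * mnm m s)" by (rule peval_superset) auto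
  also have "\<dots> = (\<Sum>m\<in>?S. lk f m * mnm m s) + (\<Sum>m\<in>?S. lk g m * mnm m s)"
    by (simp add: lookup_add distrib_right sum.distrib)
  also have "\<dots> = peval f s + peval g s" by (subst (1 2) peval_superset[symmetric]) auto
  finally show ?thesis .
qed
lemma peval_add: "addop (\<lambda>P. peval P s)"
  unfolding addop_def by (simp add: peval_add0)

lemma peval_single: "peval (sg m c) s = c * mnm m s"
  unfolding peval_def mnm_def by simp

lemma peval_mult: "peval (P * R) s = peval P s * peval R s"
proof -
  have "(\<lambda>P. peval (P * R) s) = (\<lambda>P. peval P s * peval R s)"
  proof (rule lin_ext)
    show "addop (\<lambda>P. peval (P * R) s)" using peval_add[of s] unfolding addop_def by (simp add: distrib_right)
    show "addop (\<lambda>P. peval P s * peval R s)" using peval_add[of s] unfolding addop_def by (simp add: algebra_simps)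
    fix a \<alpha>
    have "(\<lambda>R. peval (sg a \<alpha> * R) s) = (\<lambda>R. peval (sg a \<alpha>) s * peval R s)"
    proof (rule lin_ext)
      show "addop (\<lambda>R. peval (sg a \<alpha> * R) s)" using peval_add[of s] unfolding addop_def by (simp add: distrib_left)
      show "addop (\<lambda>R. peval (sg a \<alpha>) s * peval R s)" using peval_add[of s] unfolding addop_def by (simp add: algebra_simps)
      fix b \<beta>
      show "peval (sg a \<alpha> * sg b \<beta>) s = peval (sg a \<alpha>) s * peval (sg b \<beta>) s"
        by (simp add: mult_single peval_single mnm_def lookup_add power_add prod.distrib mult_ac)
    qed
    then show "peval (sg a \<alpha> * R) s = peval (sg a \<alpha>) s * peval R s" by metis
  qed
  then show ?thesis by metis
qed

section \<open>Weyl algebra closure\<close>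

lemma weyl_addop: "A \<in> weyl \<Longrightarrow> addop A"
proof (induction rule: weyl.induct)
  case (weyl_x i) then show ?case by (rule addop_xop)
next
  case (weyl_d i) then show ?case by (rule addop_pd)
next
  case (weyl_const c) then show ?case by (rule addop_mulI')
next
  case (weyl_add A B) then have "addop A" "addop B" by auto then show ?case by (rule addop_add)
next
  case (weyl_comp A B) then have "addop A" "addop B" by auto then show ?case by (rule addop_comp)
qed

lemma weyl_id: "(\<lambda>f. f) \<in> weyl"
proof -
  have "(\<lambda>f. sg 0 (1::complex) * f) \<in> weyl" by (rule weyl_const)
  moreover have "(\<lambda>f. sg 0 (1::complex) * (f::'n mpoly)) = (\<lambda>f. f)" by auto
  ultimately show ?thesis by simp
qed

lemma weyl_zero: "(\<lambda>f. 0) \<in> weyl"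
proof -
  have "(\<lambda>f. sg 0 (0::complex) * f) \<in> weyl" by (rule weyl_const)
  moreover have "(\<lambda>f. sg 0 (0::complex) * (f::'n mpoly)) = (\<lambda>f. 0)" by auto
  ultimately show ?thesis by simp
qed

lemma weyl_compI: "A \<in> weyl \<Longrightarrow> B \<in> weyl \<Longrightarrow> (\<lambda>f. A (B f)) \<in> weyl"
  using weyl_comp[of A B] by (simp add: o_def)

lemma weyl_cmul: "A \<in> weyl \<Longrightarrow> (\<lambda>f. sg 0 c * A f) \<in> weyl"
  by (rule weyl_compI[OF weyl_const])

lemma weyl_diff: "A \<in> weyl \<Longrightarrow> B \<in> weyl \<Longrightarrow> (\<lambda>f. A f - B f) \<in> weyl"
proof -
  assume "A \<in> weyl" "B \<in> weyl"
  then have "(\<lambda>f. A f + sg 0 (-1) * B f) \<in> weyl" by (intro weyl_add weyl_cmul)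
  moreover have "(\<lambda>f. A f + sg 0 (-1) * B f) = (\<lambda>f. A f - B f)" by (rule ext) (simp add: single_uminus)
  ultimately show ?thesis by simp
qed

lemma weyl_sum: "finite S \<Longrightarrow> (\<And>x. x \<in> S \<Longrightarrow> A x \<in> weyl) \<Longrightarrow> (\<lambda>f. \<Sum>x\<in>S. A x f) \<in> weyl"
  by (induction S rule: finite_induct) (auto intro: weyl_zero weyl_add)

lemma sum_lk_single: "sum (lk (sg (k::'n::finite) (1::nat))) UNIV = (1::nat)"
proof -
  have "sum (lk (sg k (1::nat))) UNIV = sum (\<lambda>k'. if k' = k then 1 else 0) UNIV"
    by (rule sum.cong) (auto simp: lookup_single when_def)
  also have "\<dots> = 1" by simp
  finally show ?thesis .
qed

lemma sum_lk_single': "sum (lk (sg (k::'n::finite) (Suc 0))) UNIV = Suc 0"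
  using sum_lk_single[of k] by simp

lemma degree_induct:
  fixes P :: "('n::finite \<Rightarrow>\<^sub>0 nat) \<Rightarrow> bool"
  assumes "P 0" "\<And>m k. P m \<Longrightarrow> P (m + sg k 1)"
  shows "P m"
proof -
  have "\<forall>m. (\<Sum>k\<in>UNIV. lk m k) = d \<longrightarrow> P m" for d
  proof (induction d)
    case 0
    show ?case
    proof (intro allI impI)
      fix m :: "'n \<Rightarrow>\<^sub>0 nat" assume "(\<Sum>k\<in>UNIV. lk m k) = 0"
      then have "m = 0" by (intro poly_mapping_eqI) simp
      then show "P m" using assms by simp
    qed
  next
    case (Suc d)
    show ?case
    proof (intro allI impI)
      fix m :: "'n \<Rightarrow>\<^sub>0 nat" assume h: "(\<Sum>k\<in>UNIV. lk m k) = Suc d"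
      then obtain k where k: "lk m k > 0"
        by (metis gr0I sum.neutral nat.distinct(1))
      define m' where "m' = m - sg k 1"
      have mm: "m = m' + sg k 1" unfolding m'_def using k
        by (intro poly_mapping_eqI) (auto simp: lookup_add lookup_minus lookup_single when_def)
      have "(\<Sum>k\<in>UNIV. lk m k) = (\<Sum>k\<in>UNIV. lk m' k) + 1"
        by (subst mm) (simp add: lookup_add sum.distrib sum_lk_single sum_lk_single')
      then have "P m'" using Suc h by simp
      then show "P m" using mm assms by simp
    qed
  qed
  then show ?thesis by blast
qed

lemma weyl_xmono: "(\<lambda>f. sg m 1 * f) \<in> weyl"
proof (induction m rule: degree_induct)
  case 1 then show ?case using weyl_id by simp
next
  case (2 m k)
  have e: "sg (m + sg k 1) (1::complex) = sg (sg k 1) 1 * sg m 1" by (simp add: mult_single add.commute)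
  have "(\<lambda>f. sg (m + sg k 1) 1 * f) = (\<lambda>f. xop k (sg m 1 * f))"
    by (rule ext) (simp only: xop_def e mult.assoc)
  then show ?case using weyl_compI[OF weyl_x 2] by simp
qed

lemma weyl_mulop: "(\<lambda>f. c * f) \<in> weyl"
proof -
  have "(\<lambda>f. c * f) = (\<lambda>f. \<Sum>m\<in>ks c. sg 0 (lk c m) * (sg m 1 * f))"
  proof
    fix f
    have "c * f = (\<Sum>m\<in>ks c. sg m (lk c m)) * f" by (simp add: sum_monos)
    also have "\<dots> = (\<Sum>m\<in>ks c. sg 0 (lk c m) * (sg m 1 * f))"
      by (simp add: sum_distrib_right mult.assoc[symmetric] mult_single)
    finally show "c * f = (\<Sum>m\<in>ks c. sg 0 (lk c m) * (sg m 1 * f))" .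
  qed
  also have "\<dots> \<in> weyl" by (intro weyl_sum weyl_cmul weyl_xmono) auto
  finally show ?thesis .
qed

lemma weyl_pdpow: "pdpow a \<in> weyl"
proof (induction a rule: degree_induct)
  case 1 then show ?case using weyl_id by (simp add: pdpow_0)
next
  case (2 m k)
  have e: "pdpow (m + sg k 1) = pd k \<circ> pdpow m"
    by (simp add: add.commute[of m] pdpow_add pd_pdpow)
  show ?case by (simp only: e) (rule weyl_comp[OF weyl_d 2])
qed

definition uu :: "nat \<Rightarrow> complex poly" where
  "uu M = (\<Prod>i<M. [:- of_nat i, 1:])"

definition emb :: "'n \<Rightarrow> complex poly \<Rightarrow> 'n mpoly" where
  "emb j v = (\<Sum>k\<le>degree v. sg (sg j k) (coeff v k))"

definition Qs :: "nat \<Rightarrow> 'n \<Rightarrow> 'n mpoly" where "Qs M j = emb j (uu M)"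
definition Ps :: "nat \<Rightarrow> 'n \<Rightarrow> 'n mpoly" where "Ps M j = emb j (pcompose (uu M) [:1,1:])"

lemma poly_uu: "poly (uu M) z = (\<Prod>i<M. z - of_nat i)"
  by (simp add: uu_def poly_prod)

lemma uu_nz: "uu M \<noteq> 0"
  by (simp add: uu_def)

lemma degree_uu: "degree (uu M) = M"
  unfolding uu_def by (subst degree_prod_eq_sum_degree) auto

lemma mnm_single: "mnm (sg j k) s = s j ^ k"
proof -
  have "\<And>k'. s k' ^ lk (sg j k) k' = (if k' = j then s j ^ k else 1)" by (auto simp: lookup_single when_def)
  then show ?thesis unfolding mnm_def by simp
qed

lemma peval_emb: "peval (emb j v) s = poly v (s j)"
  unfolding emb_def
  by (simp add: addop_sum[OF peval_add] peval_single mnm_single poly_altdef)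

lemma peval_Qs: "peval (Qs M j) (\<lambda>k. of_nat (lk m k)) = ffc M (lk m j)"
  by (simp add: Qs_def peval_emb poly_uu ffc_def)

lemma peval_Ps: "peval (Ps M j) (\<lambda>k. of_nat (lk m k)) = ffc M (Suc (lk m j))"
  by (simp add: Ps_def peval_emb poly_uu ffc_def poly_pcompose add.commute)

abbreviation H where "H M \<equiv> horn_op (Ps M) (Qs M)"

lemma H_single: "H M j (sg m c) = sg (m + sg j 1) (ffc M (Suc (lk m j)) * c) - sg m (ffc M (lk m j) * c)"
  by (simp add: horn_single peval_Ps peval_Qs)

lemma single_cong0: "(b \<noteq> 0 \<Longrightarrow> k = k') \<Longrightarrow> sg k b = sg k' b"
  by (cases "b = 0") auto

lemma ffc_nz: "ffc r n \<noteq> 0 \<Longrightarrow> r \<le> n"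
  using ffc_zero[of n r] by (cases "n < r") auto

definition xm :: "'n \<Rightarrow> nat \<Rightarrow> 'n mpoly" where "xm j r = sg (sg j r) 1"

lemma H_decomp:
  assumes "M \<ge> 1"
  shows "H M j = (\<lambda>f. (xm j (Suc M) - xm j M) * pdpow (sg j M) f + sg (sg j M) (of_nat M) * pdpow (sg j (M - 1)) f)"
proof (rule lin_ext[OF addop_horn])
  show "addop (\<lambda>f. (xm j (Suc M) - xm j M) * pdpow (sg j M) f + sg (sg j M) (of_nat M) * pdpow (sg j (M - 1)) f)"
    by (intro addop_add addop_mulI addop_pdpow)
  fix m c
  define F where "F = ffc M (lk m j)"
  define F' where "F' = ffc (M - 1) (lk m j)"
  have k1: "sg (sg j (Suc M) + (m - sg j M)) (F * c) = sg (m + sg j 1) (F * c)"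
  proof (rule single_cong0)
    assume "F * c \<noteq> 0" then have "M \<le> lk m j" unfolding F_def using ffc_nz by auto
    then show "sg j (Suc M) + (m - sg j M) = m + sg j 1"
      by (intro poly_mapping_eqI) (auto simp: lookup_add lookup_minus lookup_single when_def)
  qed
  have k2: "sg (sg j M + (m - sg j M)) (F * c) = sg m (F * c)"
  proof (rule single_cong0)
    assume "F * c \<noteq> 0" then have "M \<le> lk m j" unfolding F_def using ffc_nz by auto
    then show "sg j M + (m - sg j M) = m"
      by (intro poly_mapping_eqI) (auto simp: lookup_add lookup_minus lookup_single when_def)
  qed
  have k3: "sg (sg j M + (m - sg j (M - 1))) (of_nat M * (F' * c)) = sg (m + sg j 1) (of_nat M * (F' * c))"
  proof (rule single_cong0)
    assume "of_nat M * (F' * c) \<noteq> 0" then have "M - 1 \<le> lk m j" unfolding F'_def using ffc_nz by auto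
    then show "sg j M + (m - sg j (M - 1)) = m + sg j 1" using assms
      by (intro poly_mapping_eqI) (auto simp: lookup_add lookup_minus lookup_single when_def)
  qed
  have ff: "ffc M (Suc (lk m j)) = F + of_nat M * F'"
  proof -
    obtain M' where M: "M = Suc M'" using assms by (cases M) auto
    show ?thesis unfolding F_def F'_def M by (simp only: ffc_shift) (simp add: ffc_Suc algebra_simps)
  qed
  have "(xm j (Suc M) - xm j M) * pdpow (sg j M) (sg m c) + sg (sg j M) (of_nat M) * pdpow (sg j (M - 1)) (sg m c)
     = sg (sg j (Suc M) + (m - sg j M)) (F * c) - sg (sg j M + (m - sg j M)) (F * c) + sg (sg j M + (m - sg j (M - 1))) (of_nat M * (F' * c))"
    by (simp only: xm_def pdpow_single wtc_single left_diff_distrib mult_single F_def F'_def mult_1_left)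
  also have "\<dots> = sg (m + sg j 1) (F * c) - sg m (F * c) + sg (m + sg j 1) (of_nat M * (F' * c))"
    by (simp only: k1 k2 k3)
  also have "\<dots> = (sg (m + sg j 1) (F * c) + sg (m + sg j 1) (of_nat M * (F' * c))) - sg m (F * c)"
    by (rule diff_add_eq)
  also have "\<dots> = sg (m + sg j 1) ((F + of_nat M * F') * c) - sg m (F * c)"
    by (simp only: distrib_right single_add mult.assoc)
  also have "\<dots> = H M j (sg m c)" by (simp only: H_single ff F_def)
  finally show "H M j (sg m c) = (xm j (Suc M) - xm j M) * pdpow (sg j M) (sg m c) + sg (sg j M) (of_nat M) * pdpow (sg j (M - 1)) (sg m c)" by (rule sym)
qed

lemma pdpow_H_comm:
  assumes "lk b j = 0"
  shows "(\<lambda>f. pdpow b (H M j f)) = (\<lambda>f. H M j (pdpow b f))"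
proof (rule lin_ext)
  show "addop (\<lambda>f. pdpow b (H M j f))" by (rule addop_comp'[OF addop_pdpow addop_horn])
  show "addop (\<lambda>f. H M j (pdpow b f))" by (rule addop_comp'[OF addop_horn addop_pdpow])
  fix m c
  have w: "wtc b (m + sg j (Suc 0)) = wtc b m" unfolding wtc_def
    by (rule prod.cong) (auto simp: lookup_add lookup_single when_def assms)
  have k: "m + sg j (Suc 0) - b = m - b + sg j (Suc 0)" using assms
    by (intro poly_mapping_eqI) (auto simp: lookup_add lookup_minus lookup_single when_def)
  have l: "lk (m - b) j = lk m j" using assms by (simp add: lookup_minus)
  show "pdpow b (H M j (sg m c)) = H M j (pdpow b (sg m c))"
    by (simp add: H_single pdpow_single addop_minus[OF addop_pdpow] w k l mult_ac)
qed

lemma H_comm: "H M j \<circ> H M k = H M k \<circ> H M j"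
proof (cases "j = k")
  case True then show ?thesis by simp
next
  case False
  show ?thesis
  proof (rule lin_ext[OF addop_comp[OF addop_horn addop_horn] addop_comp[OF addop_horn addop_horn]])
    fix m :: "_ \<Rightarrow>\<^sub>0 nat" and c :: complex
    have 1: "lk (m + sg k 1) j = lk m j" "lk (m + sg j 1) k = lk m k" using False
      by (auto simp: lookup_add lookup_single when_def)
    show "(H M j \<circ> H M k) (sg m c) = (H M k \<circ> H M j) (sg m c)"
      using False by (simp add: H_single addop_minus[OF addop_horn] lookup_add lookup_single when_def not_sym[OF False] algebra_simps add.left_commute)
  qed
qed


section \<open>Ideal reasoning\<close>

lemma lideal_weylI: "A \<in> weyl \<Longrightarrow> B \<in> lideal G \<Longrightarrow> (\<lambda>f. A (B f)) \<in> lideal G"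
  using lideal_mult[of A B G] by (simp add: o_def)

lemma lideal_mulI: "B \<in> lideal G \<Longrightarrow> (\<lambda>f. r * B f) \<in> lideal G"
  by (rule lideal_weylI[OF weyl_mulop])

lemma lideal_diff: "A \<in> lideal G \<Longrightarrow> B \<in> lideal G \<Longrightarrow> (\<lambda>f. A f - B f) \<in> lideal G"
proof -
  assume a: "A \<in> lideal G" "B \<in> lideal G"
  have "(\<lambda>f. A f + (-1) * B f) \<in> lideal G" by (intro lideal_add a lideal_mulI)
  moreover have "(\<lambda>f. A f + (-1) * B f) = (\<lambda>f. A f - B f)" by (rule ext) simp
  ultimately show ?thesis by simp
qed

definition eqv :: "'n::finite diffop set \<Rightarrow> 'n diffop \<Rightarrow> 'n diffop \<Rightarrow> bool" where
  "eqv G X Y \<longleftrightarrow> (\<lambda>f. X f - Y f) \<in> lideal G"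

lemma eqv_refl: "eqv G X X"
  unfolding eqv_def using lideal_zero[of G] by simp

lemma eqv_trans: "eqv G X Y \<Longrightarrow> eqv G Y Z \<Longrightarrow> eqv G X Z"
  unfolding eqv_def
proof -
  assume "(\<lambda>f. X f - Y f) \<in> lideal G" "(\<lambda>f. Y f - Z f) \<in> lideal G"
  then have "(\<lambda>f. (X f - Y f) + (Y f - Z f)) \<in> lideal G" by (rule lideal_add)
  then show "(\<lambda>f. X f - Z f) \<in> lideal G" by simp
qed

lemma eqv_add: "eqv G X1 Y1 \<Longrightarrow> eqv G X2 Y2 \<Longrightarrow> eqv G (\<lambda>f. X1 f + X2 f) (\<lambda>f. Y1 f + Y2 f)"
  unfolding eqv_def
proof -
  assume "(\<lambda>f. X1 f - Y1 f) \<in> lideal G" "(\<lambda>f. X2 f - Y2 f) \<in> lideal G"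
  then have "(\<lambda>f. (X1 f - Y1 f) + (X2 f - Y2 f)) \<in> lideal G" by (rule lideal_add)
  moreover have "(\<lambda>f. (X1 f - Y1 f) + (X2 f - Y2 f)) = (\<lambda>f. (X1 f + X2 f) - (Y1 f + Y2 f))" by (rule ext) simp
  ultimately show "(\<lambda>f. (X1 f + X2 f) - (Y1 f + Y2 f)) \<in> lideal G" by simp
qed

lemma eqv_diff: "eqv G X1 Y1 \<Longrightarrow> eqv G X2 Y2 \<Longrightarrow> eqv G (\<lambda>f. X1 f - X2 f) (\<lambda>f. Y1 f - Y2 f)"
  unfolding eqv_def
proof -
  assume "(\<lambda>f. X1 f - Y1 f) \<in> lideal G" "(\<lambda>f. X2 f - Y2 f) \<in> lideal G"
  then have "(\<lambda>f. (X1 f - Y1 f) - (X2 f - Y2 f)) \<in> lideal G" by (rule lideal_diff)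
  moreover have "(\<lambda>f. (X1 f - Y1 f) - (X2 f - Y2 f)) = (\<lambda>f. (X1 f - X2 f) - (Y1 f - Y2 f))" by (rule ext) simp
  ultimately show "(\<lambda>f. (X1 f - X2 f) - (Y1 f - Y2 f)) \<in> lideal G" by simp
qed

lemma eqv_mul: "eqv G X Y \<Longrightarrow> eqv G (\<lambda>f. r * X f) (\<lambda>f. r * Y f)"
  unfolding eqv_def
proof -
  assume "(\<lambda>f. X f - Y f) \<in> lideal G"
  then have "(\<lambda>f. r * (X f - Y f)) \<in> lideal G" by (rule lideal_mulI)
  then show "(\<lambda>f. r * X f - r * Y f) \<in> lideal G" by (simp add: right_diff_distrib)
qed

lemma eqv_weyl: "A \<in> weyl \<Longrightarrow> eqv G X Y \<Longrightarrow> eqv G (\<lambda>f. A (X f)) (\<lambda>f. A (Y f))"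
  unfolding eqv_def
proof -
  assume a: "A \<in> weyl" "(\<lambda>f. X f - Y f) \<in> lideal G"
  then have "(\<lambda>f. A (X f - Y f)) \<in> lideal G" by (rule lideal_weylI)
  then show "(\<lambda>f. A (X f) - A (Y f)) \<in> lideal G" using addop_minus[OF weyl_addop[OF a(1)]] by simp
qed

lemma eqv_sum: "finite S \<Longrightarrow> (\<And>x. x \<in> S \<Longrightarrow> eqv G (X x) (Y x)) \<Longrightarrow> eqv G (\<lambda>f. \<Sum>x\<in>S. X x f) (\<lambda>f. \<Sum>x\<in>S. Y x f)"
proof (induction S rule: finite_induct)
  case empty then show ?case by (simp add: eqv_refl)
next
  case (insert x F)
  then have "eqv G (\<lambda>f. X x f + (\<Sum>x\<in>F. X x f)) (\<lambda>f. Y x f + (\<Sum>x\<in>F. Y x f))"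
    by (intro eqv_add) auto
  then show ?case using insert by simp
qed

section \<open>Reduced operators\<close>

definition Bs :: "nat \<Rightarrow> ('n::finite \<Rightarrow>\<^sub>0 nat) set" where
  "Bs M = {b. \<forall>k. lk b k < M}"

lemma finite_Bs: "finite (Bs M :: ('n::finite \<Rightarrow>\<^sub>0 nat) set)"
proof -
  have f1: "finite (PiE (UNIV::'n set) (\<lambda>_. {..<M}))" by (rule finite_PiE) auto
  have e1: "PiE (UNIV::'n set) (\<lambda>_. {..<M}) = {f. \<forall>k. f k < M}" unfolding PiE_iff by auto
  have inj: "inj (lk :: ('n \<Rightarrow>\<^sub>0 nat) \<Rightarrow> _)" by (rule injI) (rule poly_mapping_eqI, simp)
  have "finite (lk -` {f::'n \<Rightarrow> nat. \<forall>k. f k < M})"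
    using finite_vimageI[OF f1[unfolded e1] inj] .
  moreover have "Bs M = lk -` {f::'n \<Rightarrow> nat. \<forall>k. f k < M}" unfolding Bs_def by auto
  ultimately show ?thesis by simp
qed

definition red :: "nat \<Rightarrow> 'n::finite diffop \<Rightarrow> bool" where
  "red M R \<longleftrightarrow> (\<exists>c. R = (\<lambda>f. \<Sum>b\<in>Bs M. c b * pdpow b f))"

lemma red_single: "b \<in> Bs M \<Longrightarrow> red M (\<lambda>f. r * pdpow b f)"
  unfolding red_def
proof (intro exI[of _ "\<lambda>b'. if b' = b then r else 0"] ext)
  fix f assume b: "b \<in> Bs M"
  have "(\<Sum>b'\<in>Bs M. (if b' = b then r else 0) * pdpow b' f) = (\<Sum>b'\<in>Bs M. if b' = b then r * pdpow b f else 0)"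
    by (rule sum.cong) auto
  also have "\<dots> = r * pdpow b f" using b by (simp add: finite_Bs)
  finally show "r * pdpow b f = (\<Sum>b'\<in>Bs M. (if b' = b then r else 0) * pdpow b' f)" by simp
qed

lemma red_zero: "red M (\<lambda>f. 0)"
  unfolding red_def by (intro exI[of _ "\<lambda>_. 0"]) simp

lemma red_add: "red M R1 \<Longrightarrow> red M R2 \<Longrightarrow> red M (\<lambda>f. R1 f + R2 f)"
  unfolding red_def
proof -
  assume "\<exists>c. R1 = (\<lambda>f. \<Sum>b\<in>Bs M. c b * pdpow b f)" "\<exists>c. R2 = (\<lambda>f. \<Sum>b\<in>Bs M. c b * pdpow b f)"
  then obtain c1 c2 where "R1 = (\<lambda>f. \<Sum>b\<in>Bs M. c1 b * pdpow b f)" "R2 = (\<lambda>f. \<Sum>b\<in>Bs M. c2 b * pdpow b f)" by blast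
  then show "\<exists>c. (\<lambda>f. R1 f + R2 f) = (\<lambda>f. \<Sum>b\<in>Bs M. c b * pdpow b f)"
    by (intro exI[of _ "\<lambda>b. c1 b + c2 b"]) (simp add: distrib_right sum.distrib)
qed

lemma red_diff: "red M R1 \<Longrightarrow> red M R2 \<Longrightarrow> red M (\<lambda>f. R1 f - R2 f)"
  unfolding red_def
proof -
  assume "\<exists>c. R1 = (\<lambda>f. \<Sum>b\<in>Bs M. c b * pdpow b f)" "\<exists>c. R2 = (\<lambda>f. \<Sum>b\<in>Bs M. c b * pdpow b f)"
  then obtain c1 c2 where "R1 = (\<lambda>f. \<Sum>b\<in>Bs M. c1 b * pdpow b f)" "R2 = (\<lambda>f. \<Sum>b\<in>Bs M. c2 b * pdpow b f)" by blast
  then show "\<exists>c. (\<lambda>f. R1 f - R2 f) = (\<lambda>f. \<Sum>b\<in>Bs M. c b * pdpow b f)"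
    by (intro exI[of _ "\<lambda>b. c1 b - c2 b"]) (simp add: left_diff_distrib sum_subtractf)
qed

lemma red_mul: "red M R \<Longrightarrow> red M (\<lambda>f. r * R f)"
  unfolding red_def
proof -
  assume "\<exists>c. R = (\<lambda>f. \<Sum>b\<in>Bs M. c b * pdpow b f)"
  then obtain c where "R = (\<lambda>f. \<Sum>b\<in>Bs M. c b * pdpow b f)" by blast
  then show "\<exists>c. (\<lambda>f. r * R f) = (\<lambda>f. \<Sum>b\<in>Bs M. c b * pdpow b f)"
    by (intro exI[of _ "\<lambda>b. r * c b"]) (simp add: sum_distrib_left mult.assoc)
qed

lemma red_sum: "finite S \<Longrightarrow> (\<And>x. x \<in> S \<Longrightarrow> red M (R x)) \<Longrightarrow> red M (\<lambda>f. \<Sum>x\<in>S. R x f)"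
proof (induction S rule: finite_induct)
  case empty then show ?case by (simp add: red_zero)
next
  case (insert x F)
  then have "red M (\<lambda>f. R x f + (\<Sum>x\<in>F. R x f))" by (intro red_add) auto
  then show ?case using insert by simp
qed

lemma pd_pdpow_comp: "pd k (pdpow b f) = pdpow (sg k 1 + b) f"
  by (simp add: pdpow_add pd_pdpow)

definition ww :: "nat \<Rightarrow> 'n \<Rightarrow> 'n mpoly" where "ww M k = xm k (Suc M) - xm k M"

lemma term_red:
  assumes M: "M \<ge> 1" and b: "b \<in> Bs M"
  shows "\<exists>R. red M R \<and> eqv (range (H M)) (\<lambda>f. (ww M k * r) * pdpow (sg k 1 + b) f) R"
proof (cases "lk b k + 1 < M")
  case True
  have "sg k 1 + b \<in> Bs M" using True b
    by (auto simp: Bs_def lookup_add lookup_single when_def)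
  then show ?thesis using red_single eqv_refl by blast
next
  case False
  with b have bk: "lk b k = M - 1" by (auto simp: Bs_def dest: spec[of _ k])
  define b'' where "b'' = b - sg k (M - 1)"
  have b''k: "lk b'' k = 0" using bk by (simp add: b''_def lookup_minus)
  have bb: "b = sg k (M - 1) + b''" unfolding b''_def using bk
    by (intro poly_mapping_eqI) (auto simp: lookup_add lookup_minus lookup_single when_def)
  have bb2: "sg k 1 + b = sg k M + b''" using M
    by (simp add: bb add.assoc[symmetric] single_add[symmetric])
  define c3 where "c3 = sg (sg k M) (of_nat M :: complex)"
  have Hd: "\<And>g. H M k g = ww M k * pdpow (sg k M) g + c3 * pdpow (sg k (M - 1)) g"
    using H_decomp[OF M, of k] by (simp add: ww_def c3_def)
  have comm: "\<And>f. H M k (pdpow b'' f) = pdpow b'' (H M k f)"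
    using pdpow_H_comm[OF b''k, of M] by metis
  define R where "R = (\<lambda>f. (- (r * c3)) * pdpow b f)"
  have "red M R" unfolding R_def by (rule red_single[OF b])
  moreover have "eqv (range (H M)) (\<lambda>f. (ww M k * r) * pdpow (sg k 1 + b) f) R"
    unfolding eqv_def
  proof -
    have "(\<lambda>f. r * pdpow b'' (H M k f)) \<in> lideal (range (H M))"
      by (rule lideal_mulI[OF lideal_weylI[OF weyl_pdpow lideal_gen]]) simp
    moreover have "(\<lambda>f. r * pdpow b'' (H M k f)) = (\<lambda>f. (ww M k * r) * pdpow (sg k 1 + b) f - R f)"
    proof
      fix f
      have "r * pdpow b'' (H M k f) = r * H M k (pdpow b'' f)" by (simp add: comm)
      also have "\<dots> = r * (ww M k * pdpow (sg k M) (pdpow b'' f) + c3 * pdpow (sg k (M - 1)) (pdpow b'' f))"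
        by (simp add: Hd)
      also have "pdpow (sg k M) (pdpow b'' f) = pdpow (sg k 1 + b) f" by (simp only: bb2 pdpow_add comp_apply)
      also have "pdpow (sg k (M - 1)) (pdpow b'' f) = pdpow b f" by (simp only: bb pdpow_add comp_apply)
      finally show "r * pdpow b'' (H M k f) = (ww M k * r) * pdpow (sg k 1 + b) f - R f"
        by (simp add: R_def algebra_simps)
    qed
    ultimately show "(\<lambda>f. (ww M k * r) * pdpow (sg k 1 + b) f - R f) \<in> lideal (range (H M))" by simp
  qed
  ultimately show ?thesis by blast
qed

lemma red_step:
  assumes M: "M \<ge> 1" and R: "red M R"
  shows "\<exists>R'. red M R' \<and> eqv (range (H M)) (\<lambda>f. ww M k * pd k (R f)) R'"
proof -
  obtain c where c: "R = (\<lambda>f. \<Sum>b\<in>Bs M. c b * pdpow b f)" using R unfolding red_def by blast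
  have "\<forall>b\<in>Bs M. \<exists>R. red M R \<and> eqv (range (H M)) (\<lambda>f. (ww M k * c b) * pdpow (sg k 1 + b) f) R"
    using term_red[OF M] by blast
  then obtain Rf where Rf: "\<And>b. b \<in> Bs M \<Longrightarrow> red M (Rf b) \<and> eqv (range (H M)) (\<lambda>f. (ww M k * c b) * pdpow (sg k 1 + b) f) (Rf b)"
    by metis
  define R' where "R' = (\<lambda>f. (\<Sum>b\<in>Bs M. Rf b f) + (\<Sum>b\<in>Bs M. (ww M k * pd k (c b)) * pdpow b f))"
  have "red M R'" unfolding R'_def
    by (intro red_add red_sum finite_Bs red_single) (use Rf in blast)+
  moreover have "eqv (range (H M)) (\<lambda>f. (\<Sum>b\<in>Bs M. (ww M k * c b) * pdpow (sg k 1 + b) f) + (\<Sum>b\<in>Bs M. (ww M k * pd k (c b)) * pdpow b f)) R'"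
    unfolding R'_def by (intro eqv_add eqv_sum finite_Bs eqv_refl) (use Rf in blast)
  moreover have "(\<lambda>f. ww M k * pd k (R f)) = (\<lambda>f. (\<Sum>b\<in>Bs M. (ww M k * c b) * pdpow (sg k 1 + b) f) + (\<Sum>b\<in>Bs M. (ww M k * pd k (c b)) * pdpow b f))"
  proof
    fix f
    have "pd k (R f) = (\<Sum>b\<in>Bs M. pd k (c b * pdpow b f))" by (simp add: c addop_sum[OF addop_pd])
    also have "\<dots> = (\<Sum>b\<in>Bs M. c b * pdpow (sg k 1 + b) f + pd k (c b) * pdpow b f)"
      by (simp add: leibniz pd_pdpow_comp)
    finally show "ww M k * pd k (R f) = (\<Sum>b\<in>Bs M. (ww M k * c b) * pdpow (sg k 1 + b) f) + (\<Sum>b\<in>Bs M. (ww M k * pd k (c b)) * pdpow b f)"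
      by (simp add: sum_distrib_left sum.distrib distrib_left mult.assoc)
  qed
  ultimately show ?thesis by auto
qed


lemma peval_zero: "peval 0 s = 0" by (simp add: peval_def)

lemma peval_one: "peval 1 s = 1"
proof -
  have "peval (sg 0 1) s = 1" by (simp only: peval_single mnm_def) simp
  then show ?thesis by (simp only: single_one)
qed

lemma peval_xm: "peval (xm k r) s = s k ^ r"
  by (simp add: xm_def peval_single mnm_single)

lemma peval_ww: "peval (ww M k) (\<lambda>_. 2) = 2 ^ M"
  by (simp add: ww_def addop_minus[OF peval_add] peval_xm)

lemma main_ind:
  fixes a :: "'n::finite \<Rightarrow>\<^sub>0 nat"
  assumes M: "M \<ge> 1"
  shows "\<exists>q R. peval q (\<lambda>_. 2) \<noteq> 0 \<and> red M R \<and> eqv (range (H M)) (\<lambda>f. q * pdpow a f) R"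
proof (induction a rule: degree_induct)
  case 1
  have "(0::'n \<Rightarrow>\<^sub>0 nat) \<in> Bs M" using M by (simp add: Bs_def)
  then have "red M (\<lambda>f::'n mpoly. 1 * pdpow 0 f)" by (rule red_single)
  moreover have "eqv (range (H M)) (\<lambda>f. 1 * pdpow 0 f) (\<lambda>f::'n mpoly. 1 * pdpow 0 f)" by (rule eqv_refl)
  moreover have "peval (1::'n mpoly) (\<lambda>_. 2) \<noteq> 0" by (simp add: peval_one)
  ultimately show ?case by blast
next
  case (2 a k)
  then obtain q R where q: "peval q (\<lambda>_. 2) \<noteq> 0" and R: "red M R"
    and E0: "eqv (range (H M)) (\<lambda>f. q * pdpow a f) R" by blast
  obtain R' where R': "red M R'" and E3: "eqv (range (H M)) (\<lambda>f. ww M k * pd k (R f)) R'"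
    using red_step[OF M R, of k] by blast
  let ?G = "range (H M)"
  let ?w = "ww M k"
  have pdq: "(\<lambda>f. pd k (q * pdpow a f)) = (\<lambda>f. q * pdpow (a + sg k 1) f + pd k q * pdpow a f)"
    by (rule ext) (simp add: leibniz pd_pdpow_comp add.commute)
  have E1: "eqv ?G (\<lambda>f. pd k (q * pdpow a f)) (\<lambda>f. pd k (R f))"
    by (rule eqv_weyl[OF weyl_d E0])
  have E2: "eqv ?G (\<lambda>f. (?w * q) * (q * pdpow (a + sg k 1) f + pd k q * pdpow a f)) (\<lambda>f. (?w * q) * pd k (R f))"
    using eqv_mul[OF E1[unfolded pdq], of "?w * q"] by simp
  have E3': "eqv ?G (\<lambda>f. (?w * q) * pd k (R f)) (\<lambda>f. q * R' f)"
    using eqv_mul[OF E3, of q] by (simp add: mult_ac)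
  have E4: "eqv ?G (\<lambda>f. (?w * pd k q) * (q * pdpow a f)) (\<lambda>f. (?w * pd k q) * R f)"
    by (rule eqv_mul[OF E0])
  note E5 = eqv_diff[OF E2 E4]
  note E6 = eqv_diff[OF E3' eqv_refl[of ?G "\<lambda>f. (?w * pd k q) * R f"]]
  have E7: "eqv ?G (\<lambda>f. (?w * q) * (q * pdpow (a + sg k 1) f + pd k q * pdpow a f) - (?w * pd k q) * (q * pdpow a f))
      (\<lambda>f. q * R' f - (?w * pd k q) * R f)"
    using eqv_trans[OF E5 E6] by simp
  have feq: "(\<lambda>f. (?w * q) * (q * pdpow (a + sg k 1) f + pd k q * pdpow a f) - (?w * pd k q) * (q * pdpow a f))
      = (\<lambda>f. (?w * q * q) * pdpow (a + sg k 1) f)"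
    by (rule ext) (simp add: algebra_simps)
  have "red M (\<lambda>f. q * R' f - (?w * pd k q) * R f)"
    by (rule red_diff[OF red_mul[OF R'] red_mul[OF R]])
  moreover have "peval (?w * q * q) (\<lambda>_. 2) \<noteq> 0"
    using q by (simp add: peval_mult peval_ww)
  ultimately show ?case using E7[unfolded feq] by blast
qed

section \<open>Degrees\<close>

lemma lk_emb: "lk (emb j v) m = (if m = sg j (lk m j) then coeff v (lk m j) else 0)"
proof -
  have iff: "\<And>k. (sg j k = m) = (k = lk m j \<and> m = sg j (lk m j))" by auto
  have "lk (emb j v) m = (\<Sum>k\<le>degree v. coeff v k when sg j k = m)"
    by (simp add: emb_def lookup_sum lookup_single)
  also have "\<dots> = (\<Sum>k\<le>degree v. if k = lk m j \<and> m = sg j (lk m j) then coeff v k else 0)"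
    by (rule sum.cong) (simp_all only: when_def iff)
  also have "\<dots> = (if m = sg j (lk m j) then coeff v (lk m j) else 0)"
  proof (cases "m = sg j (lk m j)")
    case True
    then show ?thesis by (simp add: coeff_eq_0 not_le)
  next
    case False then show ?thesis by simp
  qed
  finally show ?thesis .
qed

lemma keys_emb: "ks (emb j v) = (\<lambda>k. sg j k) ` {k. coeff v k \<noteq> 0}"
proof
  show "ks (emb j v) \<subseteq> (\<lambda>k. sg j k) ` {k. coeff v k \<noteq> 0}"
  proof
    fix x assume "x \<in> ks (emb j v)"
    then have "x = sg j (lk x j) \<and> coeff v (lk x j) \<noteq> 0" by (simp add: in_keys_iff lk_emb split: if_splits)
    then show "x \<in> (\<lambda>k. sg j k) ` {k. coeff v k \<noteq> 0}" by blast
  qed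
  show "(\<lambda>k. sg j k) ` {k. coeff v k \<noteq> 0} \<subseteq> ks (emb j v)"
    by (auto simp: in_keys_iff lk_emb)
qed

lemma emb_nz: "v \<noteq> 0 \<Longrightarrow> emb j v \<noteq> 0"
proof
  assume v: "v \<noteq> 0" and "emb j v = 0"
  then have "lk (emb j v) (sg j (degree v)) = 0" by simp
  then show False using v by (simp add: lk_emb)
qed

lemma sum_lk_sg: "sum (lk (sg (j::'n::finite) r)) UNIV = r"
proof -
  have "sum (lk (sg j r)) UNIV = sum (\<lambda>k'. if k' = j then r else 0) UNIV"
    by (rule sum.cong) (auto simp: lookup_single when_def)
  also have "\<dots> = r" by simp
  finally show ?thesis .
qed

lemma tdeg_emb: "v \<noteq> 0 \<Longrightarrow> tdeg (emb (j::'n::finite) v) = degree v"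
proof -
  assume v: "v \<noteq> 0"
  have fin: "finite {k. coeff v k \<noteq> 0}"
    by (rule finite_subset[of _ "{..degree v}"]) (auto intro: le_degree)
  have "(\<lambda>m::'n \<Rightarrow>\<^sub>0 nat. \<Sum>k\<in>UNIV. lk m k) ` ks (emb j v) = {k. coeff v k \<noteq> 0}"
    by (simp add: keys_emb image_image sum_lk_sg)
  moreover have "Max {k. coeff v k \<noteq> 0} = degree v"
    by (rule Max_eqI[OF fin]) (auto intro: le_degree simp: v)
  moreover have "tdeg (emb j v) = Max ((\<lambda>m::'n \<Rightarrow>\<^sub>0 nat. \<Sum>k\<in>UNIV. lk m k) ` ks (emb j v))"
    unfolding tdeg_def using emb_nz[OF v, of j] by (rule if_not_P)
  ultimately show ?thesis by simp
qed

lemma deg_pc: "M \<ge> 1 \<Longrightarrow> degree (pcompose (uu M) [:1, 1:]) = M"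
  by (simp add: degree_pcompose degree_uu)

lemma pc_nz: "M \<ge> 1 \<Longrightarrow> pcompose (uu M) [:1, 1:] \<noteq> 0"
  using deg_pc[of M] by auto

lemma nonconf: "M \<ge> 1 \<Longrightarrow> nonconfluent (Ps M) (Qs M :: 'n::finite \<Rightarrow> _)"
  unfolding nonconfluent_def Ps_def Qs_def
  by (simp add: tdeg_emb pc_nz uu_nz deg_pc degree_uu)

lemma hornsys: "horn_system (Ps M) (Qs M :: 'n::finite \<Rightarrow> _)"
  unfolding horn_system_def
proof (intro conjI allI exI[of _ "\<lambda>_. 1"] exI[of _ UNIV])
  fix j :: 'n show "Qs M j \<noteq> 0" by (simp add: Qs_def emb_nz uu_nz)
next
  show "open (UNIV :: ('n \<Rightarrow> complex) set)" by simp
  show "closure (UNIV :: ('n \<Rightarrow> complex) set) = UNIV" by simp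
  show "\<forall>s\<in>UNIV. (1::complex) \<noteq> 0 \<and> (\<forall>j. 1 * peval (Qs M j) (shift s j) = peval (Ps M j) s * 1)"
    by (simp add: Qs_def Ps_def peval_emb shift_def poly_pcompose add.commute)
qed

lemma weyl_H: "M \<ge> 1 \<Longrightarrow> H M j \<in> weyl"
  by (simp only: H_decomp) (rule weyl_add[OF weyl_compI[OF weyl_mulop weyl_pdpow] weyl_compI[OF weyl_mulop weyl_pdpow]])

lemma H_kill:
  assumes "\<And>m k. m \<in> ks p \<Longrightarrow> Suc (lk m k) < M"
  shows "H M j p = 0"
proof -
  have "H M j p = H M j (\<Sum>m\<in>ks p. sg m (lk p m))" by (simp add: sum_monos)
  also have "\<dots> = (\<Sum>m\<in>ks p. H M j (sg m (lk p m)))" by (rule addop_sum[OF addop_horn])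
  also have "\<dots> = 0"
  proof (rule sum.neutral, intro ballI)
    fix m assume m: "m \<in> ks p"
    have "ffc M (Suc (lk m j)) = 0" "ffc M (lk m j) = 0" using assms[OF m, of j] by (auto intro: ffc_zero)
    then show "H M j (sg m (lk p m)) = 0" by (simp add: H_single)
  qed
  finally show ?thesis .
qed

theorem theorem3p1:
  fixes p :: "('n::finite \<Rightarrow>\<^sub>0 nat) \<Rightarrow>\<^sub>0 complex"
  shows "\<exists>P Q :: 'n \<Rightarrow> 'n mpoly.
           horn_system P Q \<and> nonconfluent P Q \<and> holonomic P Q \<and>
           (\<forall>j. horn_op P Q j p = 0) \<and>
           (\<exists>G. finite G \<and> G \<subseteq> weyl \<and>
                lideal G = lideal (Set.range (horn_op P Q)) \<and>
                (\<forall>g\<in>G. \<forall>h\<in>G. g \<circ> h = h \<circ> g))"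
proof -
  define N where "N = (\<Sum>m\<in>ks p. sum (lk m) UNIV)"
  define M where "M = Suc (Suc N)"
  have M1: "M \<ge> 1" by (simp add: M_def)
  have kill: "\<forall>j::'n. H M j p = 0"
  proof
    fix j show "H M j p = 0"
    proof (rule H_kill)
      fix m k assume m: "m \<in> ks p"
      have "lk m k \<le> sum (lk m) UNIV" by (rule member_le_sum) auto
      also have "\<dots> \<le> N" unfolding N_def by (rule member_le_sum[OF m]) auto
      finally show "Suc (lk m k) < M" by (simp add: M_def)
    qed
  qed
  have hol: "holonomic (Ps M) (Qs M :: 'n \<Rightarrow> _)"
    unfolding holonomic_def
  proof (intro exI[of _ "Bs M"] conjI allI)
    show "finite (Bs M :: ('n \<Rightarrow>\<^sub>0 nat) set)" by (rule finite_Bs)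
    fix a :: "'n \<Rightarrow>\<^sub>0 nat"
    obtain q R where q: "peval q (\<lambda>_. 2) \<noteq> 0" and R: "red M R" and E: "eqv (range (H M)) (\<lambda>f. q * pdpow a f) R"
      using main_ind[OF M1, of a] by blast
    obtain c where c: "R = (\<lambda>f. \<Sum>b\<in>Bs M. c b * pdpow b f)" using R unfolding red_def by blast
    have "q \<noteq> 0" using q peval_zero by auto
    moreover have "(\<lambda>f. mulop q (pdpow a f) - (\<Sum>b\<in>Bs M. mulop (c b) (pdpow b f))) \<in> lideal (range (H M))"
      using E unfolding eqv_def c mulop_def by simp
    ultimately show "\<exists>q c. q \<noteq> 0 \<and> (\<lambda>f. mulop q (pdpow a f) - (\<Sum>b\<in>Bs M. mulop (c b) (pdpow b f))) \<in> lideal (range (H M))"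
      by blast
  qed
  have G: "finite (range (H M)) \<and> range (H M) \<subseteq> weyl \<and> lideal (range (H M)) = lideal (range (H M)) \<and>
      (\<forall>g\<in>range (H M). \<forall>h\<in>range (H M). g \<circ> h = h \<circ> g)"
    using weyl_H[OF M1] H_comm by auto
  have hs: "horn_system (Ps M) (Qs M :: 'n \<Rightarrow> _)" by (rule hornsys)
  have nc: "nonconfluent (Ps M) (Qs M :: 'n \<Rightarrow> _)" by (rule nonconf[OF M1])
  show ?thesis
    apply (rule exI[of _ "Ps M"])
    apply (rule exI[of _ "Qs M"])
    using hs nc hol kill G by blast
qed

end
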